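(* Let $\mathcal C,\mathcal D$ be parsummable categories and $F\colon\mathcal C\to\mathcal D$ a functor of underlying categories that preserves sums. Then $F_*\mathcal C$ (described below) is a well-defined parsummable category.
   Context: Let $\omega=\{1,2,\dots\}$, $\mathcal M$ the monoid of injections $\omega\to\omega$, $E\mathcal M$ the category with objects $\mathcal M$ and unique morphisms between any two objects. An $E\mathcal M$-category is a small category with a strict $E\mathcal M$-action ($u_*$ the action of $u$, $[v,u]\colon u_*\Rightarrow v_*$, $u^X_\circ=[u,1]_X$). Such an action is uniquely determined by an $\mathcal M$-action on objects together with isomorphisms $u^X_\circ\colon X\to u_*X$ satisfying $(uv)^X_\circ=u^{v_*X}_\circ v^X_\circ$. $\mathrm{supp}(X)$ is the intersection of the finite $A\subset\omega$ such that $u_*X=X$ for all $u$ fixing $A$ pointwise; tame means all supports finite. A parsummable category is a tame $E\mathcal M$-category with an object $0$ of empty support and a functor $+$ on the full subcategory $\mathcal C\boxtimes\mathcal C\subset\mathcal C\times\mathcal C$ of disjointly supported pairs, strictly unital, associative, commutative and $E\mathcal M$-equivariant ($u_*(X+Y)=u_*X+u_*Y$, $u^{X+Y}_\circ=u^X_\circ+u^Y_\circ$). A functor $F\colon\mathcal C\to\mathcal D$ of underlying categories preserves sums if $F(0)=0$, $F\times F$ maps $\mathcal C\boxtimes\mathcal C$ into $\mathcal D\boxtimes\mathcal D$, and $F(X+Y)=F(X)+F(Y)$, $F(f+g)=F(f)+F(g)$ for all summable objects and morphisms. $F_*\mathcal C$: objects are the objects of $\mathcal C$; $\mathrm{Hom}_{F_*\mathcal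 C}(X,Y)=\mathrm{Hom}_{\mathcal D}(FX,FY)$ with composition in $\mathcal D$; the $\mathcal M$-action on objects is that of $\mathcal C$, and $u^X_\circ$ is $F(u^X_\circ)\colon F(X)\to F(u_*X)$; the sum of objects is the sum in $\mathcal C$ (with unit $0$), and the sum of morphisms is the sum in $\mathcal D$. *)

theory Defs
  imports Main
begin

text \<open>Small categories are presented by a carrier of objects, hom-sets indexed by
  pairs of objects, identities and a (totally defined, but only constrained on
  composable pairs) composition.\<close>

record ('o, 'm) pcat =
  Ob    :: "'o set"
  Hom   :: "'o \<Rightarrow> 'o \<Rightarrow> 'm set"
  Id    :: "'o \<Rightarrow> 'm"
  Comp  :: "'m \<Rightarrow> 'm \<Rightarrow> 'm"
  Act   :: "(nat \<Rightarrow> nat) \<Rightarrow> 'o \<Rightarrow> 'o"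
  Circ  :: "(nat \<Rightarrow> nat) \<Rightarrow> 'o \<Rightarrow> 'm"
  Zero  :: "'o"
  PlusO :: "'o \<Rightarrow> 'o \<Rightarrow> 'o"
  PlusM :: "'m \<Rightarrow> 'm \<Rightarrow> 'm"

text \<open>The monoid of injective self-maps of the countable set omega, modelled by nat.\<close>
definition Mon :: "(nat \<Rightarrow> nat) set" where
  "Mon = {u. inj u}"

definition category :: "('o, 'm) pcat \<Rightarrow> bool" where
  "category C \<longleftrightarrow>
     (\<forall>X\<in>Ob C. Id C X \<in> Hom C X X) \<and>
     (\<forall>X\<in>Ob C. \<forall>Y\<in>Ob C. \<forall>Z\<in>Ob C. \<forall>f g.
         f \<in> Hom C X Y \<and> g \<in> Hom C Y Z \<longrightarrow> Comp C g f \<in> Hom C X Z) \<and>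
     (\<forall>X\<in>Ob C. \<forall>Y\<in>Ob C. \<forall>f. f \<in> Hom C X Y \<longrightarrow>
         Comp C f (Id C X) = f \<and> Comp C (Id C Y) f = f) \<and>
     (\<forall>W\<in>Ob C. \<forall>X\<in>Ob C. \<forall>Y\<in>Ob C. \<forall>Z\<in>Ob C. \<forall>f g h.
         f \<in> Hom C W X \<and> g \<in> Hom C X Y \<and> h \<in> Hom C Y Z \<longrightarrow>
         Comp C h (Comp C g f) = Comp C (Comp C h g) f)"

definition is_iso :: "('o, 'm) pcat \<Rightarrow> 'o \<Rightarrow> 'o \<Rightarrow> 'm \<Rightarrow> bool" where
  "is_iso C X Y f \<longleftrightarrow> f \<in> Hom C X Y \<and>
     (\<exists>g\<in>Hom C Y X. Comp C g f = Id C X \<and> Comp C f g = Id C Y)"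

text \<open>EM-category, given (as in the paper) by an M-action on objects together with
  isomorphisms u_circ^X : X \<rightarrow> u_* X satisfying the cocycle condition.\<close>
definition em_category :: "('o, 'm) pcat \<Rightarrow> bool" where
  "em_category C \<longleftrightarrow> category C \<and>
     (\<forall>u\<in>Mon. \<forall>X\<in>Ob C. Act C u X \<in> Ob C) \<and>
     (\<forall>X\<in>Ob C. Act C id X = X) \<and>
     (\<forall>u\<in>Mon. \<forall>v\<in>Mon. \<forall>X\<in>Ob C. Act C (u \<circ> v) X = Act C u (Act C v X)) \<and>
     (\<forall>u\<in>Mon. \<forall>X\<in>Ob C. is_iso C X (Act C u X) (Circ C u X)) \<and>
     (\<forall>u\<in>Mon. \<forall>v\<in>Mon. \<forall>X\<in>Ob C.
         Circ C (u \<circ> v) X = Comp C (Circ C u (Act C v X)) (Circ C v X))"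

definition supp :: "('o, 'm) pcat \<Rightarrow> 'o \<Rightarrow> nat set" where
  "supp C X = \<Inter> {A. finite A \<and> (\<forall>u\<in>Mon. (\<forall>a\<in>A. u a = a) \<longrightarrow> Act C u X = X)}"

definition tame :: "('o, 'm) pcat \<Rightarrow> bool" where
  "tame C \<longleftrightarrow> (\<forall>X\<in>Ob C. finite (supp C X))"

definition summable :: "('o, 'm) pcat \<Rightarrow> 'o \<Rightarrow> 'o \<Rightarrow> bool" where
  "summable C X Y \<longleftrightarrow> X \<in> Ob C \<and> Y \<in> Ob C \<and> supp C X \<inter> supp C Y = {}"

definition parsummable :: "('o, 'm) pcat \<Rightarrow> bool" where
  "parsummable C \<longleftrightarrow> em_category C \<and> tame C \<and>
     Zero C \<in> Ob C \<and> supp C (Zero C) = {} \<and>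
     \<comment> \<open>+ is a functor C \<boxtimes> C \<rightarrow> C\<close>
     (\<forall>X Y. summable C X Y \<longrightarrow> PlusO C X Y \<in> Ob C) \<and>
     (\<forall>X Y X' Y' f g. summable C X Y \<and> summable C X' Y' \<and>
         f \<in> Hom C X X' \<and> g \<in> Hom C Y Y' \<longrightarrow>
         PlusM C f g \<in> Hom C (PlusO C X Y) (PlusO C X' Y')) \<and>
     (\<forall>X Y. summable C X Y \<longrightarrow> PlusM C (Id C X) (Id C Y) = Id C (PlusO C X Y)) \<and>
     (\<forall>X Y X' Y' X'' Y'' f g f' g'. summable C X Y \<and> summable C X' Y' \<and>
         summable C X'' Y'' \<and> f \<in> Hom C X X' \<and> g \<in> Hom C Y Y' \<and>
         f' \<in> Hom C X' X'' \<and> g' \<in> Hom C Y' Y'' \<longrightarrow>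
         PlusM C (Comp C f' f) (Comp C g' g) = Comp C (PlusM C f' g') (PlusM C f g)) \<and>
     \<comment> \<open>strictly unital\<close>
     (\<forall>X\<in>Ob C. PlusO C X (Zero C) = X \<and> PlusO C (Zero C) X = X) \<and>
     (\<forall>X\<in>Ob C. \<forall>X'\<in>Ob C. \<forall>f. f \<in> Hom C X X' \<longrightarrow>
         PlusM C f (Id C (Zero C)) = f \<and> PlusM C (Id C (Zero C)) f = f) \<and>
     \<comment> \<open>associative\<close>
     (\<forall>X Y Z. summable C X Y \<and> summable C X Z \<and> summable C Y Z \<longrightarrow>
         PlusO C (PlusO C X Y) Z = PlusO C X (PlusO C Y Z)) \<and>
     (\<forall>X Y Z X' Y' Z' f g h. summable C X Y \<and> summable C X Z \<and> summable C Y Z \<and>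
         summable C X' Y' \<and> summable C X' Z' \<and> summable C Y' Z' \<and>
         f \<in> Hom C X X' \<and> g \<in> Hom C Y Y' \<and> h \<in> Hom C Z Z' \<longrightarrow>
         PlusM C (PlusM C f g) h = PlusM C f (PlusM C g h)) \<and>
     \<comment> \<open>commutative\<close>
     (\<forall>X Y. summable C X Y \<longrightarrow> PlusO C X Y = PlusO C Y X) \<and>
     (\<forall>X Y X' Y' f g. summable C X Y \<and> summable C X' Y' \<and>
         f \<in> Hom C X X' \<and> g \<in> Hom C Y Y' \<longrightarrow> PlusM C f g = PlusM C g f) \<and>
     \<comment> \<open>EM-equivariant\<close>
     (\<forall>u\<in>Mon. \<forall>X Y. summable C X Y \<longrightarrow>
         Act C u (PlusO C X Y) = PlusO C (Act C u X) (Act C u Y) \<and>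
         Circ C u (PlusO C X Y) = PlusM C (Circ C u X) (Circ C u Y))"

definition is_functor ::
    "('o, 'm) pcat \<Rightarrow> ('p, 'n) pcat \<Rightarrow> ('o \<Rightarrow> 'p) \<Rightarrow> ('m \<Rightarrow> 'n) \<Rightarrow> bool" where
  "is_functor C D Fo Fm \<longleftrightarrow>
     (\<forall>X\<in>Ob C. Fo X \<in> Ob D) \<and>
     (\<forall>X\<in>Ob C. \<forall>Y\<in>Ob C. \<forall>f. f \<in> Hom C X Y \<longrightarrow> Fm f \<in> Hom D (Fo X) (Fo Y)) \<and>
     (\<forall>X\<in>Ob C. Fm (Id C X) = Id D (Fo X)) \<and>
     (\<forall>X\<in>Ob C. \<forall>Y\<in>Ob C. \<forall>Z\<in>Ob C. \<forall>f g.
         f \<in> Hom C X Y \<and> g \<in> Hom C Y Z \<longrightarrow> Fm (Comp C g f) = Comp D (Fm g) (Fm f))"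

definition preserves_sums ::
    "('o, 'm) pcat \<Rightarrow> ('p, 'n) pcat \<Rightarrow> ('o \<Rightarrow> 'p) \<Rightarrow> ('m \<Rightarrow> 'n) \<Rightarrow> bool" where
  "preserves_sums C D Fo Fm \<longleftrightarrow>
     Fo (Zero C) = Zero D \<and>
     (\<forall>X Y. summable C X Y \<longrightarrow> summable D (Fo X) (Fo Y)) \<and>
     (\<forall>X Y. summable C X Y \<longrightarrow> Fo (PlusO C X Y) = PlusO D (Fo X) (Fo Y)) \<and>
     (\<forall>X Y X' Y' f g. summable C X Y \<and> summable C X' Y' \<and>
         f \<in> Hom C X X' \<and> g \<in> Hom C Y Y' \<longrightarrow>
         Fm (PlusM C f g) = PlusM D (Fm f) (Fm g))"

definition pushforward ::
    "('o, 'm) pcat \<Rightarrow> ('p, 'n) pcat \<Rightarrow> ('o \<Rightarrow> 'p) \<Rightarrow> ('m \<Rightarrow> 'n) \<Rightarrow> ('o, 'n) pcat" where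
  "pushforward C D Fo Fm =
     \<lparr> Ob = Ob C,
       Hom = (\<lambda>X Y. Hom D (Fo X) (Fo Y)),
       Id = (\<lambda>X. Id D (Fo X)),
       Comp = Comp D,
       Act = Act C,
       Circ = (\<lambda>u X. Fm (Circ C u X)),
       Zero = Zero C,
       PlusO = PlusO C,
       PlusM = PlusM D \<rparr>"

end

theory Submission
  imports Defs
begin

definition swp :: "nat \<Rightarrow> nat \<Rightarrow> nat \<Rightarrow> nat" where
  "swp p q = (\<lambda>x. if x = p then q else if x = q then p else x)"

lemma swp_bij: "bij (swp p q)"
proof (rule o_bij)
  show "swp p q \<circ> swp p q = id" by (auto simp: swp_def fun_eq_iff)
  then show "swp p q \<circ> swp p q = id" .
qed

lemma ext_bij:
  assumes "finite A" "inj (u::nat \<Rightarrow> nat)"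
  shows "\<exists>\<pi>. bij \<pi> \<and> (\<forall>a\<in>A. \<pi> a = u a)"
  using assms(1)
proof (induction A rule: finite_induct)
  case empty
  then show ?case using bij_id by (intro exI[of _ id]) (simp add: id_def)
next
  case (insert a A)
  then obtain \<pi> where p: "bij \<pi>" "\<forall>x\<in>A. \<pi> x = u x" by blast
  define \<sigma> where "\<sigma> = swp (\<pi> a) (u a) \<circ> \<pi>"
  have "bij \<sigma>" unfolding \<sigma>_def using p(1) swp_bij bij_comp by blast
  moreover have "\<forall>x\<in>insert a A. \<sigma> x = u x"
  proof
    fix x assume x: "x \<in> insert a A"
    show "\<sigma> x = u x"
    proof (cases "x = a")
      case True then show ?thesis by (simp add: \<sigma>_def swp_def)
    next
      case False
      then have xA: "x \<in> A" using x by auto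
      have "\<pi> x \<noteq> \<pi> a" using p(1) False by (metis bij_is_inj injD)
      moreover have "u x \<noteq> u a" using assms(2) False by (metis injD)
      ultimately show ?thesis using p(2) xA by (simp add: \<sigma>_def swp_def)
    qed
  qed
  ultimately show ?case by blast
qed

lemma agree:
  assumes em: "em_category C" and X: "X \<in> Ob C" and A: "finite A"
    and sup: "\<forall>v\<in>Mon. (\<forall>a\<in>A. v a = a) \<longrightarrow> Act C v X = X"
    and u: "u \<in> Mon" and w: "w \<in> Mon" and uw: "\<forall>a\<in>A. u a = w a"
  shows "Act C u X = Act C w X"
proof -
  have acts: "\<forall>u\<in>Mon. \<forall>v\<in>Mon. \<forall>X\<in>Ob C. Act C (u \<circ> v) X = Act C u (Act C v X)"
    using em unfolding em_category_def by blast
  have iu: "inj u" using u by (simp add: Mon_def)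
  obtain \<pi> where p: "bij \<pi>" "\<forall>a\<in>A. \<pi> a = u a" using ext_bij[OF A iu] by blast
  have pM: "\<pi> \<in> Mon" using p(1) by (simp add: Mon_def bij_is_inj)
  have ipi: "inj (inv \<pi>)" using p(1) bij_imp_bij_inv bij_is_inj by blast
  have key: "Act C t X = Act C \<pi> X" if t: "t \<in> Mon" "\<forall>a\<in>A. t a = u a" for t
  proof -
    have it: "inj t" using t by (simp add: Mon_def)
    have eq: "t = \<pi> \<circ> (inv \<pi> \<circ> t)"
      using p(1) by (simp add: fun_eq_iff bij_is_surj surj_f_inv_f)
    have sM: "inv \<pi> \<circ> t \<in> Mon" using ipi it by (simp add: Mon_def inj_compose)
    have fx0: "\<forall>a\<in>A. (inv \<pi> \<circ> t) a = a"
      using p t by (metis bij_is_inj comp_apply inv_f_f)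
    have "Act C t X = Act C \<pi> (Act C (inv \<pi> \<circ> t) X)"
      using acts pM sM X eq by metis
    also have "\<dots> = Act C \<pi> X" using sup sM fx0 by simp
    finally show ?thesis .
  qed
  show ?thesis using key[OF u] key[OF w] uw by simp
qed

lemma supp_act:
  assumes em: "em_category C" and tm: "tame C" and X: "X \<in> Ob C" and u: "u \<in> Mon"
    and x: "x \<in> supp C (Act C u X)"
  shows "\<exists>a\<in>supp C X. x = u a"
proof -
  define F where "F = {A. finite A \<and> (\<forall>v\<in>Mon. (\<forall>a\<in>A. v a = a) \<longrightarrow> Act C v X = X)}"
  have sF: "supp C X = \<Inter> F" by (simp add: supp_def F_def)
  have "F \<noteq> {}"
  proof
    assume "F = {}"
    then have "supp C X = UNIV" using sF by simp
    moreover have "finite (supp C X)" using tm X by (simp add: tame_def)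
    ultimately show False by simp
  qed
  then obtain A0 where A0: "A0 \<in> F" by blast
  have acts: "\<forall>u\<in>Mon. \<forall>v\<in>Mon. \<forall>X\<in>Ob C. Act C (u \<circ> v) X = Act C u (Act C v X)"
    using em unfolding em_category_def by blast
  have iu: "inj u" using u by (simp add: Mon_def)
  have inimg: "x \<in> u ` A" if AF: "A \<in> F" for A
  proof -
    have "finite (u ` A)" using AF by (simp add: F_def)
    moreover have "\<forall>v\<in>Mon. (\<forall>a\<in>u ` A. v a = a) \<longrightarrow> Act C v (Act C u X) = Act C u X"
    proof (intro ballI impI)
      fix v assume v: "v \<in> Mon" and fx: "\<forall>a\<in>u ` A. v a = a"
      have vu: "v \<circ> u \<in> Mon" using v u by (simp add: Mon_def inj_compose)
      have "Act C (v \<circ> u) X = Act C u X"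
        apply (rule agree[OF em X])
        using AF fx vu u by (auto simp: F_def)
      then show "Act C v (Act C u X) = Act C u X" using acts v u X by metis
    qed
    ultimately show ?thesis using x unfolding supp_def by blast
  qed
  obtain a0 where a0: "a0 \<in> A0" "x = u a0" using inimg[OF A0] by blast
  have "a0 \<in> A" if AF2: "A \<in> F" for A
  proof -
    obtain a where "a \<in> A" "x = u a" using inimg[OF AF2] by blast
    then show ?thesis using a0 iu by (metis injD)
  qed
  then have "a0 \<in> supp C X" using sF by blast
  then show ?thesis using a0 by blast
qed

lemma summable_act:
  assumes em: "em_category C" and tm: "tame C" and u: "u \<in> Mon"
    and s: "summable C X Y"
  shows "summable C (Act C u X) (Act C u Y)"
proof -
  have X: "X \<in> Ob C" and Y: "Y \<in> Ob C" and d: "supp C X \<inter> supp C Y = {}"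
    using s by (auto simp: summable_def)
  have iu: "inj u" using u by (simp add: Mon_def)
  have "supp C (Act C u X) \<inter> supp C (Act C u Y) = {}"
  proof (rule ccontr)
    assume "\<not> ?thesis"
    then obtain x where "x \<in> supp C (Act C u X)" "x \<in> supp C (Act C u Y)" by blast
    then obtain a b where "a \<in> supp C X" "x = u a" "b \<in> supp C Y" "x = u b"
      using supp_act[OF em tm X u] supp_act[OF em tm Y u] by metis
    then show False using d iu by (metis disjoint_iff injD)
  qed
  moreover have "Act C u X \<in> Ob C" "Act C u Y \<in> Ob C"
    using em X Y u unfolding em_category_def by auto
  ultimately show ?thesis by (simp add: summable_def)
qed

theorem lemma3p8:
  fixes C :: "('o, 'm) pcat" and D :: "('p, 'n) pcat"
    and Fo :: "'o \<Rightarrow> 'p" and Fm :: "'m \<Rightarrow> 'n"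
  assumes "parsummable C" and "parsummable D"
    and "is_functor C D Fo Fm" and "preserves_sums C D Fo Fm"
  shows "parsummable (pushforward C D Fo Fm)"
proof -
  let ?P = "pushforward C D Fo Fm"
  have [simp]: "Ob ?P = Ob C" "Hom ?P = (\<lambda>X Y. Hom D (Fo X) (Fo Y))"
    "Id ?P = (\<lambda>X. Id D (Fo X))" "Comp ?P = Comp D" "Act ?P = Act C"
    "Circ ?P = (\<lambda>u X. Fm (Circ C u X))" "Zero ?P = Zero C" "PlusO ?P = PlusO C"
    "PlusM ?P = PlusM D" by (simp_all add: pushforward_def)
  note PS = this
  have suppP[simp]: "supp ?P = supp C" by (simp add: supp_def fun_eq_iff)
  have summP[simp]: "summable ?P = summable C" by (simp add: summable_def fun_eq_iff)
  note pC = assms(1)[unfolded parsummable_def]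
  note pD = assms(2)[unfolded parsummable_def]
  note emC = pC[THEN conjunct1, unfolded em_category_def]
  note emD = pD[THEN conjunct1, unfolded em_category_def]
  note catC = emC[THEN conjunct1, unfolded category_def]
  note catD = emD[THEN conjunct1, unfolded category_def]
  note F = assms(3)[unfolded is_functor_def]
  note S = assms(4)[unfolded preserves_sums_def]
  have FO: "\<And>X. X \<in> Ob C \<Longrightarrow> Fo X \<in> Ob D" using F by blast
  have FH: "\<And>X Y f. X \<in> Ob C \<Longrightarrow> Y \<in> Ob C \<Longrightarrow> f \<in> Hom C X Y \<Longrightarrow> Fm f \<in> Hom D (Fo X) (Fo Y)"
    using F by blast
  have FI: "\<And>X. X \<in> Ob C \<Longrightarrow> Fm (Id C X) = Id D (Fo X)" using F by blast
  have FC: "\<And>X Y Z f g. X \<in> Ob C \<Longrightarrow> Y \<in> Ob C \<Longrightarrow> Z \<in> Ob C \<Longrightarrow> f \<in> Hom C X Y \<Longrightarrow> g \<in> Hom C Y Z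
     \<Longrightarrow> Fm (Comp C g f) = Comp D (Fm g) (Fm f)" using F by blast
  have SZ: "Fo (Zero C) = Zero D" using S by blast
  have SS: "\<And>X Y. summable C X Y \<Longrightarrow> summable D (Fo X) (Fo Y)" using S by blast
  have SO: "\<And>X Y. summable C X Y \<Longrightarrow> Fo (PlusO C X Y) = PlusO D (Fo X) (Fo Y)" using S by blast
  have SM: "\<And>X Y X' Y' f g. summable C X Y \<Longrightarrow> summable C X' Y' \<Longrightarrow>
         f \<in> Hom C X X' \<Longrightarrow> g \<in> Hom C Y Y' \<Longrightarrow> Fm (PlusM C f g) = PlusM D (Fm f) (Fm g)"
    using S by blast
  have sOb: "\<And>X Y. summable C X Y \<Longrightarrow> X \<in> Ob C \<and> Y \<in> Ob C" by (simp add: summable_def)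
  have actOb: "\<And>u X. u \<in> Mon \<Longrightarrow> X \<in> Ob C \<Longrightarrow> Act C u X \<in> Ob C" using emC by blast
  have circH: "\<And>u X. u \<in> Mon \<Longrightarrow> X \<in> Ob C \<Longrightarrow> Circ C u X \<in> Hom C X (Act C u X)"
    using emC unfolding is_iso_def by blast
  have catP: "category ?P"
    unfolding category_def PS using catD FO by (intro conjI ballI allI impI; elim conjE; meson)
  have isoP: "\<forall>u\<in>Mon. \<forall>X\<in>Ob ?P. is_iso ?P X (Act ?P u X) (Circ ?P u X)"
  proof (intro ballI)
    fix u X assume u: "u \<in> Mon" and X: "X \<in> Ob ?P"
    then have X: "X \<in> Ob C" by simp
    obtain g where g: "g \<in> Hom C (Act C u X) X" "Comp C g (Circ C u X) = Id C X"
      "Comp C (Circ C u X) g = Id C (Act C u X)"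
      using emC u X unfolding is_iso_def by blast
    have uX: "Act C u X \<in> Ob C" using actOb u X by blast
    show "is_iso ?P X (Act ?P u X) (Circ ?P u X)"
      unfolding is_iso_def
      using FH[OF X uX circH[OF u X]] FH[OF uX X g(1)] FC[OF X uX X circH[OF u X] g(1)]
        FC[OF uX X uX g(1) circH[OF u X]] g FI X uX by auto
  qed
  have cocP: "\<forall>u\<in>Mon. \<forall>v\<in>Mon. \<forall>X\<in>Ob ?P.
         Circ ?P (u \<circ> v) X = Comp ?P (Circ ?P u (Act ?P v X)) (Circ ?P v X)"
  proof (intro ballI)
    fix u v X assume u: "u \<in> Mon" and v: "v \<in> Mon" and X: "X \<in> Ob ?P"
    then have X: "X \<in> Ob C" by simp
    have vX: "Act C v X \<in> Ob C" using actOb v X by blast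
    have uvX: "Act C u (Act C v X) \<in> Ob C" using actOb u vX by blast
    have "Circ C (u \<circ> v) X = Comp C (Circ C u (Act C v X)) (Circ C v X)" using emC u v X by blast
    then show "Circ ?P (u \<circ> v) X = Comp ?P (Circ ?P u (Act ?P v X)) (Circ ?P v X)"
      using FC[OF X vX uvX circH[OF v X] circH[OF u vX]] by simp
  qed
  have emP: "em_category ?P"
    unfolding em_category_def using catP isoP cocP emC by simp
  have tP: "tame ?P" using pC by (simp add: tame_def)
  have plusH: "\<forall>X Y X' Y' f g. summable ?P X Y \<and> summable ?P X' Y' \<and>
         f \<in> Hom ?P X X' \<and> g \<in> Hom ?P Y Y' \<longrightarrow>
         PlusM ?P f g \<in> Hom ?P (PlusO ?P X Y) (PlusO ?P X' Y')"
    using pD SS SO by simp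
  have plusI: "\<forall>X Y. summable ?P X Y \<longrightarrow> PlusM ?P (Id ?P X) (Id ?P Y) = Id ?P (PlusO ?P X Y)"
    using pD SS SO by simp
  have plusC: "\<forall>X Y X' Y' X'' Y'' f g f' g'. summable ?P X Y \<and> summable ?P X' Y' \<and>
         summable ?P X'' Y'' \<and> f \<in> Hom ?P X X' \<and> g \<in> Hom ?P Y Y' \<and>
         f' \<in> Hom ?P X' X'' \<and> g' \<in> Hom ?P Y' Y'' \<longrightarrow>
         PlusM ?P (Comp ?P f' f) (Comp ?P g' g) = Comp ?P (PlusM ?P f' g') (PlusM ?P f g)"
  proof (intro allI impI)
    fix X Y X' Y' X'' Y'' f g f' g'
    assume "summable ?P X Y \<and> summable ?P X' Y' \<and>
         summable ?P X'' Y'' \<and> f \<in> Hom ?P X X' \<and> g \<in> Hom ?P Y Y' \<and>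
         f' \<in> Hom ?P X' X'' \<and> g' \<in> Hom ?P Y' Y''"
    then show "PlusM ?P (Comp ?P f' f) (Comp ?P g' g) = Comp ?P (PlusM ?P f' g') (PlusM ?P f g)"
    proof -
      have DC: "\<And>X Y X' Y' X'' Y'' f g f' g'. summable D X Y \<and> summable D X' Y' \<and>
         summable D X'' Y'' \<and> f \<in> Hom D X X' \<and> g \<in> Hom D Y Y' \<and>
         f' \<in> Hom D X' X'' \<and> g' \<in> Hom D Y' Y'' \<Longrightarrow>
         PlusM D (Comp D f' f) (Comp D g' g) = Comp D (PlusM D f' g') (PlusM D f g)"
        using pD[THEN conjunct2, THEN conjunct2, THEN conjunct2, THEN conjunct2, THEN conjunct2, THEN conjunct2, THEN conjunct2, THEN conjunct1] by blast
      show ?thesis using DC[of "Fo X" "Fo Y" "Fo X'" "Fo Y'" "Fo X''" "Fo Y''" f g f' g']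
        SS[of X Y] SS[of X' Y'] SS[of X'' Y''] \<open>summable ?P X Y \<and> _\<close> by simp
    qed
  qed
  have unitM: "\<forall>X\<in>Ob ?P. \<forall>X'\<in>Ob ?P. \<forall>f. f \<in> Hom ?P X X' \<longrightarrow>
         PlusM ?P f (Id ?P (Zero ?P)) = f \<and> PlusM ?P (Id ?P (Zero ?P)) f = f"
    using pD[THEN conjunct2, THEN conjunct2, THEN conjunct2, THEN conjunct2, THEN conjunct2, THEN conjunct2, THEN conjunct2, THEN conjunct2, THEN conjunct2, THEN conjunct1] FO SZ by (simp only: PS) (metis)
  have assocM: "\<forall>X Y Z X' Y' Z' f g h. summable ?P X Y \<and> summable ?P X Z \<and> summable ?P Y Z \<and>
         summable ?P X' Y' \<and> summable ?P X' Z' \<and> summable ?P Y' Z' \<and>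
         f \<in> Hom ?P X X' \<and> g \<in> Hom ?P Y Y' \<and> h \<in> Hom ?P Z Z' \<longrightarrow>
         PlusM ?P (PlusM ?P f g) h = PlusM ?P f (PlusM ?P g h)"
  proof (intro allI impI)
    fix X Y Z X' Y' Z' f g h
    assume "summable ?P X Y \<and> summable ?P X Z \<and> summable ?P Y Z \<and>
         summable ?P X' Y' \<and> summable ?P X' Z' \<and> summable ?P Y' Z' \<and>
         f \<in> Hom ?P X X' \<and> g \<in> Hom ?P Y Y' \<and> h \<in> Hom ?P Z Z'"
    then show "PlusM ?P (PlusM ?P f g) h = PlusM ?P f (PlusM ?P g h)"
    proof -
      have DA: "\<And>X Y Z X' Y' Z' f g h. summable D X Y \<and> summable D X Z \<and> summable D Y Z \<and>
         summable D X' Y' \<and> summable D X' Z' \<and> summable D Y' Z' \<and>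
         f \<in> Hom D X X' \<and> g \<in> Hom D Y Y' \<and> h \<in> Hom D Z Z' \<Longrightarrow>
         PlusM D (PlusM D f g) h = PlusM D f (PlusM D g h)"
        using pD[THEN conjunct2, THEN conjunct2, THEN conjunct2, THEN conjunct2, THEN conjunct2, THEN conjunct2, THEN conjunct2, THEN conjunct2, THEN conjunct2, THEN conjunct2, THEN conjunct2, THEN conjunct1] by blast
      show ?thesis using DA[of "Fo X" "Fo Y" "Fo Z" "Fo X'" "Fo Y'" "Fo Z'" f g h]
        SS[of X Y] SS[of X Z] SS[of Y Z] SS[of X' Y'] SS[of X' Z'] SS[of Y' Z']
        \<open>summable ?P X Y \<and> _\<close> by simp
    qed
  qed
  have commM: "\<forall>X Y X' Y' f g. summable ?P X Y \<and> summable ?P X' Y' \<and>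
         f \<in> Hom ?P X X' \<and> g \<in> Hom ?P Y Y' \<longrightarrow> PlusM ?P f g = PlusM ?P g f"
    using pD[THEN conjunct2, THEN conjunct2, THEN conjunct2, THEN conjunct2, THEN conjunct2, THEN conjunct2, THEN conjunct2, THEN conjunct2, THEN conjunct2, THEN conjunct2, THEN conjunct2, THEN conjunct2, THEN conjunct2, THEN conjunct1] SS by (simp only: PS summP) (metis)
  have equiv: "\<forall>u\<in>Mon. \<forall>X Y. summable ?P X Y \<longrightarrow>
         Act ?P u (PlusO ?P X Y) = PlusO ?P (Act ?P u X) (Act ?P u Y) \<and>
         Circ ?P u (PlusO ?P X Y) = PlusM ?P (Circ ?P u X) (Circ ?P u Y)"
  proof (intro ballI allI impI)
    fix u X Y assume u: "u \<in> Mon" and s: "summable ?P X Y"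
    then have s: "summable C X Y" by simp
    have X: "X \<in> Ob C" and Y: "Y \<in> Ob C" using sOb[OF s] by auto
    have su: "summable C (Act C u X) (Act C u Y)"
      using summable_act[OF pC[THEN conjunct1] pC[THEN conjunct2, THEN conjunct1] u s] .
    have e: "Act C u (PlusO C X Y) = PlusO C (Act C u X) (Act C u Y) \<and>
         Circ C u (PlusO C X Y) = PlusM C (Circ C u X) (Circ C u Y)" using pC u s by blast
    show "Act ?P u (PlusO ?P X Y) = PlusO ?P (Act ?P u X) (Act ?P u Y) \<and>
         Circ ?P u (PlusO ?P X Y) = PlusM ?P (Circ ?P u X) (Circ ?P u Y)"
      using e SM[OF s su circH[OF u X] circH[OF u Y]] by simp
  qed
  have r1: "Zero ?P \<in> Ob ?P" "supp ?P (Zero ?P) = {}" using pC by simp_all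
  have r2: "\<forall>X Y. summable ?P X Y \<longrightarrow> PlusO ?P X Y \<in> Ob ?P" unfolding PS summP by (rule pC[THEN conjunct2, THEN conjunct2, THEN conjunct2, THEN conjunct2, THEN conjunct1])
  have r3: "\<forall>X\<in>Ob ?P. PlusO ?P X (Zero ?P) = X \<and> PlusO ?P (Zero ?P) X = X" unfolding PS summP by (rule pC[THEN conjunct2, THEN conjunct2, THEN conjunct2, THEN conjunct2, THEN conjunct2, THEN conjunct2, THEN conjunct2, THEN conjunct2, THEN conjunct1])
  have r4: "\<forall>X Y Z. summable ?P X Y \<and> summable ?P X Z \<and> summable ?P Y Z \<longrightarrow>
         PlusO ?P (PlusO ?P X Y) Z = PlusO ?P X (PlusO ?P Y Z)" unfolding PS summP by (rule pC[THEN conjunct2, THEN conjunct2, THEN conjunct2, THEN conjunct2, THEN conjunct2, THEN conjunct2, THEN conjunct2, THEN conjunct2, THEN conjunct2, THEN conjunct2, THEN conjunct1])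
  have r5: "\<forall>X Y. summable ?P X Y \<longrightarrow> PlusO ?P X Y = PlusO ?P Y X" unfolding PS summP by (rule pC[THEN conjunct2, THEN conjunct2, THEN conjunct2, THEN conjunct2, THEN conjunct2, THEN conjunct2, THEN conjunct2, THEN conjunct2, THEN conjunct2, THEN conjunct2, THEN conjunct2, THEN conjunct2, THEN conjunct1])
  show ?thesis
    unfolding parsummable_def
    by (intro conjI emP tP plusH plusI plusC unitM assocM commM equiv r1 r2 r3 r4 r5)
qed

end
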